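(* If a hypergraph $H$ is degenerate, then its suspension $S(H)$ is degenerate.
   Context: A hypergraph $H=(V,E)$ has finite vertex set $V$ and edge set $E\subseteq 2^V$; $R(H)=\{|F|:F\in E\}$. $H_1\subseteq H_2$ means there is an injective $f\colon V(H_1)\to V(H_2)$ with $f(F)\in E(H_2)$ for all $F\in E(H_1)$. For $G$ on $n$ vertices, $h_n(G)=\sum_{F\in E(G)}1/\binom{n}{|F|}$; $\pi_n(H)=\max\{h_n(G): G\text{ on } n \text{ vertices}, R(G)\subseteq R(H), H\not\subseteq G\}$ and $\pi(H)=\lim_n\pi_n(H)$. $H$ is degenerate if $\pi(H)=|R(H)|-1$. The suspension $S(H)$ has vertex set $V(H)\cup\{\ast\}$ for a new vertex $\ast$ and edge set $\{F\cup\{\ast\}: F\in E(H)\}$. *)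

theory Defs
  imports Complex_Main
begin

type_synonym 'a hgraph = "'a set \<times> 'a set set"

definition hypergraph :: "'a hgraph \<Rightarrow> bool" where
  "hypergraph H \<longleftrightarrow> finite (fst H) \<and> snd H \<subseteq> Pow (fst H)"

definition ranks :: "'a hgraph \<Rightarrow> nat set" where
  "ranks H = card ` snd H"

definition contained :: "'a hgraph \<Rightarrow> 'b hgraph \<Rightarrow> bool" where
  "contained H1 H2 \<longleftrightarrow> (\<exists>f. inj_on f (fst H1) \<and> f ` fst H1 \<subseteq> fst H2 \<and>
      (\<forall>F\<in>snd H1. f ` F \<in> snd H2))"

definition hdens :: "nat \<Rightarrow> 'a hgraph \<Rightarrow> real" where
  "hdens n G = (\<Sum>F\<in>snd G. 1 / real (n choose card F))"

text \<open>Hypergraphs on n vertices are taken (up to isomorphism) with vertex set {0..<n}.\<close>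
definition pi_n :: "'a hgraph \<Rightarrow> nat \<Rightarrow> real" where
  "pi_n H n = Max {hdens n ({0..<n}, E) | E. E \<subseteq> Pow {0..<n} \<and>
      ranks ({0..<n}, E) \<subseteq> ranks H \<and> \<not> contained H ({0..<n::nat}, E)}"

definition degenerate :: "'a hgraph \<Rightarrow> bool" where
  "degenerate H \<longleftrightarrow> (\<lambda>n. pi_n H n) \<longlonglongrightarrow> real (card (ranks H)) - 1"

definition suspension :: "'a hgraph \<Rightarrow> 'a option hgraph" where
  "suspension H = (insert None (Some ` fst H), (\<lambda>F. insert None (Some ` F)) ` snd H)"

end

theory Submission imports Defs begin

definition gsh :: "nat \<Rightarrow> nat \<Rightarrow> nat" where "gsh v x = (if x < v then x else x - 1)"
definition hsh :: "nat \<Rightarrow> nat \<Rightarrow> nat" where "hsh v y = (if y < v then y else y + 1)"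

lemma gsh_inj: "inj_on (gsh v) (UNIV - {v})"
  unfolding gsh_def inj_on_def by auto

lemma hsh_gsh: "x \<noteq> v \<Longrightarrow> hsh v (gsh v x) = x"
  unfolding gsh_def hsh_def by auto

lemma hsh_ne: "hsh v y \<noteq> v"
  unfolding hsh_def by auto

lemma hsh_inj: "inj (hsh v)"
  unfolding hsh_def inj_on_def by auto

lemma gsh_range: "x < n \<Longrightarrow> x \<noteq> v \<Longrightarrow> v < n \<Longrightarrow> gsh v x < n - 1"
  unfolding gsh_def by auto

lemma hsh_range: "y < n - 1 \<Longrightarrow> hsh v y < n"
  unfolding hsh_def by auto

lemma hsh_gsh_img: "v \<notin> A \<Longrightarrow> hsh v ` gsh v ` A = A"
proof -
  assume "v \<notin> A"
  then have "hsh v ` gsh v ` A = (\<lambda>x. x) ` A" unfolding image_image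
    by (intro image_cong refl) (metis hsh_gsh)
  then show ?thesis by simp
qed

definition lnk :: "nat \<Rightarrow> nat set set \<Rightarrow> nat set set" where
  "lnk v E = (\<lambda>F. gsh v ` (F - {v})) ` {F\<in>E. v\<in>F}"

lemma card_gsh: "finite F \<Longrightarrow> v \<in> F \<Longrightarrow> card (gsh v ` (F - {v})) = card F - 1"
proof -
  assume a: "finite F" "v \<in> F"
  have "inj_on (gsh v) (F - {v})" using gsh_inj by (rule inj_on_subset) auto
  then show ?thesis using a by (simp add: card_image)
qed

lemma lnk_inj: "inj_on (\<lambda>F. gsh v ` (F - {v})) {F\<in>E. v\<in>F}"
proof (rule inj_onI)
  fix F G assume F: "F \<in> {F\<in>E. v\<in>F}" and G: "G \<in> {F\<in>E. v\<in>F}"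
    and eq: "gsh v ` (F - {v}) = gsh v ` (G - {v})"
  have "hsh v ` gsh v ` (F - {v}) = F - {v}"
    by (force simp: image_image hsh_gsh)
  moreover have "hsh v ` gsh v ` (G - {v}) = G - {v}"
    by (force simp: image_image hsh_gsh)
  ultimately have "F - {v} = G - {v}" using eq by metis
  then show "F = G" using F G by blast
qed

lemma hdens_lnk:
  assumes "E \<subseteq> Pow {0..<n}"
  shows "hdens (n-1) ({0..<n-1}, lnk v E) = (\<Sum>F\<in>{F\<in>E. v\<in>F}. 1 / real ((n-1) choose (card F - 1)))"
proof -
  have "hdens (n-1) ({0..<n-1}, lnk v E) = (\<Sum>F\<in>{F\<in>E. v\<in>F}. 1 / real ((n-1) choose card (gsh v ` (F - {v}))))"
    unfolding hdens_def lnk_def by (simp add: sum.reindex[OF lnk_inj])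
  also have "\<dots> = (\<Sum>F\<in>{F\<in>E. v\<in>F}. 1 / real ((n-1) choose (card F - 1)))"
  proof (rule sum.cong)
    fix F assume "F \<in> {F\<in>E. v\<in>F}"
    then have "finite F" "v \<in> F" using assms by (auto intro: finite_subset[of F "{0..<n}"])
    then show "1 / real ((n-1) choose card (gsh v ` (F - {v}))) = 1 / real ((n-1) choose (card F - 1))"
      by (simp add: card_gsh)
  qed simp
  finally show ?thesis .
qed

lemma avg:
  assumes E: "E \<subseteq> Pow {0..<n}" and ne: "\<forall>F\<in>E. F \<noteq> {}" and n: "n \<ge> 1"
  shows "hdens n ({0..<n}, E) = (\<Sum>v<n. hdens (n-1) ({0..<n-1}, lnk v E)) / real n"
proof -
  have finE: "finite E" using E by (meson finite_Pow_iff finite_atLeastLessThan finite_subset)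
  let ?c = "\<lambda>F. 1 / real ((n-1) choose (card F - 1))"
  have "(\<Sum>v<n. hdens (n-1) ({0..<n-1}, lnk v E)) = (\<Sum>v<n. \<Sum>F\<in>{F\<in>E. v\<in>F}. ?c F)"
    using hdens_lnk[OF E] by simp
  also have "\<dots> = (\<Sum>F\<in>E. \<Sum>v\<in>{v. v<n \<and> v\<in>F}. ?c F)"
    using sum.swap_restrict[of "{..<n}" E "\<lambda>v F. ?c F" "\<lambda>v F. v \<in> F"] finE by simp
  also have "\<dots> = (\<Sum>F\<in>E. real (card F) * ?c F)"
  proof (rule sum.cong)
    fix F assume "F \<in> E"
    then have "{v. v<n \<and> v\<in>F} = F" using E by fastforce
    then show "(\<Sum>v\<in>{v. v<n \<and> v\<in>F}. ?c F) = real (card F) * ?c F" by simp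
  qed simp
  also have "\<dots> = (\<Sum>F\<in>E. real n / real (n choose card F))"
  proof (rule sum.cong)
    fix F assume F: "F \<in> E"
    then have sub: "F \<subseteq> {0..<n}" using E by auto
    then have fin: "finite F" using finite_subset by auto
    have k: "card F > 0" using F ne fin by auto
    have kn: "card F \<le> n" using card_mono[OF _ sub] by simp
    have eq: "card F * (n choose card F) = n * ((n - 1) choose (card F - 1))"
      using times_binomial_minus1_eq[OF k] .
    have nz1: "(n choose card F) > 0" using kn by simp
    have nz2: "((n-1) choose (card F - 1)) > 0" using kn k by simp
    have "real (card F) * real (n choose card F) = real n * real ((n - 1) choose (card F - 1))"
      using eq by (metis of_nat_mult)
    then show "real (card F) * ?c F = real n / real (n choose card F)"
      using nz1 nz2 by (simp add: field_simps)
  qed simp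
  finally have X: "(\<Sum>v<n. hdens (n-1) ({0..<n-1}, lnk v E)) = (\<Sum>F\<in>E. real n / real (n choose card F))" .
  have "(\<Sum>F\<in>E. real n / real (n choose card F)) / real n = (\<Sum>F\<in>E. 1 / real (n choose card F))"
    unfolding sum_divide_distrib using n by (intro sum.cong) auto
  moreover have "hdens n ({0..<n}, E) = (\<Sum>F\<in>E. 1 / real (n choose card F))" by (simp add: hdens_def)
  ultimately show ?thesis using X by simp
qed


lemma fin_set: "finite {hdens n ({0..<n}, E) | E. E \<subseteq> Pow {0..<n} \<and> P E}"
proof -
  have "{hdens n ({0..<n}, E) | E. E \<subseteq> Pow {0..<n} \<and> P E} \<subseteq> (\<lambda>E. hdens n ({0..<n}, E)) ` Pow (Pow {0..<n})"
    by auto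
  then show ?thesis by (rule finite_subset) simp
qed

lemma pi_n_ge:
  assumes "E \<subseteq> Pow {0..<n}" "ranks ({0..<n}, E) \<subseteq> ranks H" "\<not> contained H ({0..<n::nat}, E)"
  shows "hdens n ({0..<n}, E) \<le> pi_n H n"
  unfolding pi_n_def
  by (rule Max_ge[OF fin_set]) (use assms in blast)

lemma card_susp_edge: "finite F \<Longrightarrow> card (insert None (Some ` F)) = Suc (card F)"
  by (simp add: card_image)

lemma ranks_susp:
  assumes "hypergraph H"
  shows "ranks (suspension H) = Suc ` ranks H"
proof -
  have "\<forall>F\<in>snd H. finite F" using assms unfolding hypergraph_def
    by (auto intro: finite_subset)
  then show ?thesis unfolding ranks_def suspension_def
    unfolding fst_conv snd_conv image_image
    by (intro image_cong refl) (simp add: card_susp_edge card_image)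
qed

lemma upper:
  assumes hg: "hypergraph H" and n: "n \<ge> 1" and E: "E \<subseteq> Pow {0..<n}"
    and rk: "ranks ({0..<n}, E) \<subseteq> ranks (suspension H)"
    and nc: "\<not> contained (suspension H) ({0..<n}, E)"
  shows "hdens n ({0..<n}, E) \<le> pi_n H (n-1)"
proof -
  have rk': "card F \<in> Suc ` ranks H" if "F \<in> E" for F
  proof -
    have "card F \<in> ranks ({0..<n},E)" unfolding ranks_def[of "({0..<n},E)"] snd_conv using that by (rule imageI)
    then show ?thesis using rk ranks_susp[OF hg] by auto
  qed
  have ne: "\<forall>F\<in>E. F \<noteq> {}"
  proof
    fix F assume "F \<in> E"
    then have "card F \<in> Suc ` ranks H" by (rule rk')
    then show "F \<noteq> {}" by auto
  qed
  have each: "hdens (n-1) ({0..<n-1}, lnk v E) \<le> pi_n H (n-1)" if v: "v < n" for v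
  proof (rule pi_n_ge)
    show "lnk v E \<subseteq> Pow {0..<n-1}"
    proof
      fix G assume "G \<in> lnk v E"
      then obtain F where F: "F \<in> E" "v \<in> F" "G = gsh v ` (F - {v})" unfolding lnk_def by auto
      have "F \<subseteq> {0..<n}" using F E by auto
      have "G \<subseteq> {0..<n-1}"
      proof
        fix y assume "y \<in> G"
        then obtain x where x: "x \<in> F" "x \<noteq> v" "y = gsh v x" using F(3) by auto
        then have "x < n" using \<open>F \<subseteq> {0..<n}\<close> by auto
        then show "y \<in> {0..<n-1}" using gsh_range[of x n v] x v by simp
      qed
      then show "G \<in> Pow {0..<n-1}" by simp
    qed
    show "ranks ({0..<n-1}, lnk v E) \<subseteq> ranks H"
    proof
      fix k assume "k \<in> ranks ({0..<n-1}, lnk v E)"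
      then obtain F where F: "F \<in> E" "v \<in> F" "k = card (gsh v ` (F - {v}))" unfolding lnk_def ranks_def[of "({0..<n-1}, _)"] snd_conv by auto
      have fin: "finite F" using F E by (auto intro: finite_subset[of F "{0..<n}"])
      have "card F \<in> Suc ` ranks H" using F(1) by (rule rk')
      then show "k \<in> ranks H" using F card_gsh[OF fin] by auto
    qed
    show "\<not> contained H ({0..<n-1}, lnk v E)"
    proof
      assume "contained H ({0..<n-1}, lnk v E)"
      then obtain f where inj: "inj_on f (fst H)" and im: "f ` fst H \<subseteq> {0..<n-1}"
        and ed: "\<forall>F\<in>snd H. f ` F \<in> lnk v E" unfolding contained_def by auto
      define f' where "f' = (\<lambda>x. case x of None \<Rightarrow> v | Some a \<Rightarrow> hsh v (f a))"
      have "contained (suspension H) ({0..<n}, E)"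
        unfolding contained_def suspension_def fst_conv snd_conv
      proof (intro exI conjI ballI)
        show "inj_on f' (insert None (Some ` fst H))"
        proof (rule inj_onI)
          fix x y assume x: "x \<in> insert None (Some ` fst H)" and y: "y \<in> insert None (Some ` fst H)"
            and e: "f' x = f' y"
          show "x = y"
          proof (cases x)
            case None
            then show ?thesis using e hsh_ne unfolding f'_def by (cases y) (auto, metis)
          next
            case (Some a)
            show ?thesis
            proof (cases y)
              case None
              then show ?thesis using e hsh_ne Some unfolding f'_def by auto
            next
              case (Some b)
              then have "hsh v (f a) = hsh v (f b)" using e \<open>x = Some a\<close> unfolding f'_def by simp
              then have "f a = f b" using hsh_inj by (simp add: inj_eq)
              moreover have "a \<in> fst H" "b \<in> fst H" using x y Some \<open>x = Some a\<close> by auto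
              ultimately have "a = b" using inj by (simp add: inj_on_eq_iff)
              then show ?thesis using Some \<open>x = Some a\<close> by simp
            qed
          qed
        qed
        show "f' ` insert None (Some ` fst H) \<subseteq> {0..<n}"
        proof
          fix y assume "y \<in> f' ` insert None (Some ` fst H)"
          then obtain x where x: "x \<in> insert None (Some ` fst H)" "y = f' x" by auto
          show "y \<in> {0..<n}"
          proof (cases x)
            case None then show ?thesis using x v unfolding f'_def by simp
          next
            case (Some a)
            then have "a \<in> fst H" using x by auto
            then have "f a < n - 1" using im by auto
            then show ?thesis using x Some hsh_range unfolding f'_def by simp
          qed
        qed
        fix X assume "X \<in> (\<lambda>F. insert None (Some ` F)) ` snd H"
        then obtain F where F: "F \<in> snd H" "X = insert None (Some ` F)" by auto
        then obtain G where G: "G \<in> E" "v \<in> G" "f ` F = gsh v ` (G - {v})"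
          using ed unfolding lnk_def by auto
        have "hsh v ` f ` F = G - {v}" unfolding G(3) by (rule hsh_gsh_img) simp
        have "f' ` X = insert v ((\<lambda>a. hsh v (f a)) ` F)" unfolding F(2) f'_def by (simp add: image_image)
        also have "\<dots> = insert v (hsh v ` f ` F)" by (simp add: image_image)
        also have "\<dots> = G" using G(2) \<open>hsh v ` f ` F = G - {v}\<close> by auto
        finally have "f' ` X = G" .
        then show "f' ` X \<in> E" using G by simp
      qed
      then show False using nc by simp
    qed
  qed
  have "hdens n ({0..<n}, E) = (\<Sum>v<n. hdens (n-1) ({0..<n-1}, lnk v E)) / real n"
    by (rule avg[OF E ne n])
  also have "\<dots> \<le> (\<Sum>v<n. pi_n H (n-1)) / real n"
    by (intro divide_right_mono sum_mono each) auto
  also have "\<dots> = pi_n H (n-1)" using n by simp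
  finally show ?thesis .
qed

lemma finite_ranks: "hypergraph H \<Longrightarrow> finite (ranks H)"
  unfolding hypergraph_def ranks_def
  by (metis finite_Pow_iff finite_imageI finite_subset)

lemma ranks_le:
  assumes hg: "hypergraph H" and k: "k \<in> ranks (suspension H)"
  shows "k \<le> card (fst H) + 1"
proof -
  obtain F where F: "F \<in> snd H" "k = Suc (card F)" using k ranks_susp[OF hg] unfolding ranks_def by auto
  then have "F \<subseteq> fst H" "finite (fst H)" using hg unfolding hypergraph_def by auto
  then have "card F \<le> card (fst H)" by (rule card_mono[rotated])
  then show ?thesis using F by simp
qed

lemma lower:
  assumes hg: "hypergraph H" and r0: "r0 \<in> ranks H" and n: "card (fst H) + 1 \<le> n"
  shows "real (card (ranks H)) - 1 \<le> pi_n (suspension H) n \<and> pi_n (suspension H) n \<le> pi_n H (n-1)"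
proof -
  define K where "K = ranks (suspension H) - {Suc r0}"
  define E where "E = {F. F \<subseteq> {0..<n} \<and> card F \<in> K}"
  have finR: "finite (ranks H)" using finite_ranks[OF hg] .
  have RS: "ranks (suspension H) = Suc ` ranks H" by (rule ranks_susp[OF hg])
  have finK: "finite K" unfolding K_def RS using finR by simp
  have kle: "k \<le> n" if "k \<in> K" for k using ranks_le[OF hg, of k] that n unfolding K_def by auto
  have Esub: "E \<subseteq> Pow {0..<n}" unfolding E_def by auto
  have Erk: "ranks ({0..<n}, E) \<subseteq> ranks (suspension H)"
  proof
    fix x assume "x \<in> ranks ({0..<n}, E)"
    then obtain F where "F \<in> E" "x = card F" unfolding ranks_def by auto
    then show "x \<in> ranks (suspension H)" unfolding E_def K_def by auto
  qed
  have Enc: "\<not> contained (suspension H) ({0..<n}, E)"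
  proof
    assume "contained (suspension H) ({0..<n}, E)"
    then obtain f where inj: "inj_on f (fst (suspension H))"
      and ed: "\<forall>X\<in>snd (suspension H). f ` X \<in> E" unfolding contained_def by auto
    obtain F0 where F0: "F0 \<in> snd H" "card F0 = r0" using r0 unfolding ranks_def by auto
    have F0s: "F0 \<subseteq> fst H" "finite F0" using F0 hg unfolding hypergraph_def
      by (auto intro: finite_subset)
    define X where "X = insert None (Some ` F0)"
    have X: "X \<in> snd (suspension H)" unfolding X_def suspension_def using F0 by auto
    have Xsub: "X \<subseteq> fst (suspension H)" unfolding X_def suspension_def using F0s by auto
    have "card (f ` X) = card X" using inj_on_subset[OF inj Xsub] by (rule card_image)
    also have "\<dots> = Suc r0" unfolding X_def using F0 F0s by (simp add: card_susp_edge card_image)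
    finally have "card (f ` X) = Suc r0" .
    moreover have "card (f ` X) \<in> K" using ed X unfolding E_def by auto
    ultimately show False unfolding K_def by simp
  qed
  have finE: "finite E" using Esub by (meson finite_Pow_iff finite_atLeastLessThan finite_subset)
  have "hdens n ({0..<n}, E) = (\<Sum>F\<in>E. 1 / real (n choose card F))" by (simp add: hdens_def)
  also have "\<dots> = (\<Sum>k\<in>K. \<Sum>F\<in>{F. F \<in> E \<and> card F = k}. 1 / real (n choose card F))"
    by (rule sum.group[symmetric, OF finE finK]) (auto simp: E_def)
  also have "\<dots> = (\<Sum>k\<in>K. 1)"
  proof (rule sum.cong)
    fix k assume k: "k \<in> K"
    have "{F. F \<in> E \<and> card F = k} = {F. F \<subseteq> {0..<n} \<and> card F = k}" using k unfolding E_def by auto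
    then have "(\<Sum>F\<in>{F. F \<in> E \<and> card F = k}. 1 / real (n choose card F))
        = (\<Sum>F\<in>{F. F \<subseteq> {0..<n} \<and> card F = k}. 1 / real (n choose k))" by simp
    also have "\<dots> = real (n choose k) * (1 / real (n choose k))"
      using n_subsets[of "{0..<n}" k] by simp
    also have "\<dots> = 1" using kle[OF k] by simp
    finally show "(\<Sum>F\<in>{F. F \<in> E \<and> card F = k}. 1 / real (n choose card F)) = 1" .
  qed simp
  also have "\<dots> = real (card K)" by simp
  also have "\<dots> = real (card (ranks H)) - 1"
  proof -
    have "Suc r0 \<in> ranks (suspension H)" using r0 RS by auto
    then have "card K = card (ranks (suspension H)) - 1" unfolding K_def
      by (simp add: card_Diff_singleton)
    moreover have "card (ranks (suspension H)) = card (ranks H)" unfolding RS by (simp add: card_image)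
    moreover have "card (ranks H) \<ge> 1" using finR r0
      by (metis One_nat_def Suc_leI card_gt_0_iff empty_iff)
    ultimately show ?thesis by simp
  qed
  finally have hE: "hdens n ({0..<n}, E) = real (card (ranks H)) - 1" .
  have mem: "hdens n ({0..<n}, E) \<in> {hdens n ({0..<n}, E) | E. E \<subseteq> Pow {0..<n} \<and>
      ranks ({0..<n}, E) \<subseteq> ranks (suspension H) \<and> \<not> contained (suspension H) ({0..<n::nat}, E)}"
    using Esub Erk Enc by blast
  have A: "real (card (ranks H)) - 1 \<le> pi_n (suspension H) n"
    using pi_n_ge[OF Esub Erk Enc] hE by simp
  have n1: "n \<ge> 1" using n by simp
  have B: "pi_n (suspension H) n \<le> pi_n H (n-1)"
    unfolding pi_n_def[of "suspension H"]
  proof (rule Max.boundedI[OF fin_set])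
    show "{hdens n ({0..<n}, E) | E. E \<subseteq> Pow {0..<n} \<and>
      ranks ({0..<n}, E) \<subseteq> ranks (suspension H) \<and> \<not> contained (suspension H) ({0..<n::nat}, E)} \<noteq> {}"
      using mem by blast
  next
    fix a assume "a \<in> {hdens n ({0..<n}, E) | E. E \<subseteq> Pow {0..<n} \<and>
      ranks ({0..<n}, E) \<subseteq> ranks (suspension H) \<and> \<not> contained (suspension H) ({0..<n::nat}, E)}"
    then obtain E' where "a = hdens n ({0..<n}, E')" "E' \<subseteq> Pow {0..<n}"
      "ranks ({0..<n}, E') \<subseteq> ranks (suspension H)" "\<not> contained (suspension H) ({0..<n::nat}, E')" by blast
    then show "a \<le> pi_n H (n-1)" using upper[OF hg n1] by simp
  qed
  show ?thesis using A B by simp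
qed

lemma empty_set:
  assumes fin: "finite (fst G)" and e: "snd G = {}" and n: "card (fst G) \<le> n"
  shows "{hdens n ({0..<n}, E) | E. E \<subseteq> Pow {0..<n} \<and>
      ranks ({0..<n}, E) \<subseteq> ranks G \<and> \<not> contained G ({0..<n::nat}, E)} = {}"
proof -
  obtain h where h: "bij_betw h (fst G) {0..<card (fst G)}" using ex_bij_betw_finite_nat[OF fin] by blast
  have "contained G ({0..<n::nat}, E)" for E
    unfolding contained_def fst_conv snd_conv e
    using h n unfolding bij_betw_def by (intro exI[of _ h]) auto
  then show ?thesis by blast
qed

theorem mainTheorem18:
  fixes H :: "'a hgraph"
  assumes "hypergraph H" and "degenerate H"
  shows "degenerate (suspension H)"
proof (cases "ranks H = {}")
  case True
  then have e: "snd H = {}" unfolding ranks_def by simp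
  have fin: "finite (fst H)" using assms(1) unfolding hypergraph_def by simp
  have eS: "snd (suspension H) = {}" unfolding suspension_def using e by simp
  have finS: "finite (fst (suspension H))" unfolding suspension_def using fin by simp
  have cS: "card (fst (suspension H)) = card (fst H) + 1" unfolding suspension_def using fin
    by (simp add: card_susp_edge card_image)
  have ev: "\<forall>\<^sub>F n in sequentially. pi_n (suspension H) n = pi_n H n"
    unfolding eventually_sequentially
  proof (intro exI allI impI)
    fix n assume n: "n \<ge> card (fst H) + 1"
    show "pi_n (suspension H) n = pi_n H n"
    proof -
      have a: "{hdens n ({0..<n}, E) | E. E \<subseteq> Pow {0..<n} \<and>
        ranks ({0..<n}, E) \<subseteq> ranks H \<and> \<not> contained H ({0..<n::nat}, E)} = {}"
        by (rule empty_set[OF fin e]) (use n in simp)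
      have b: "{hdens n ({0..<n}, E) | E. E \<subseteq> Pow {0..<n} \<and>
        ranks ({0..<n}, E) \<subseteq> ranks (suspension H) \<and> \<not> contained (suspension H) ({0..<n::nat}, E)} = {}"
        by (rule empty_set[OF finS eS]) (use n cS in simp)
      show ?thesis by (simp only: pi_n_def a b)
    qed
  qed
  have rS: "ranks (suspension H) = {}" using ranks_susp[OF assms(1)] True by simp
  show ?thesis using assms(2) unfolding degenerate_def rS True
    using tendsto_cong[OF ev] by simp
next
  case False
  then obtain r0 where r0: "r0 \<in> ranks H" by auto
  have cS: "card (ranks (suspension H)) = card (ranks H)"
    unfolding ranks_susp[OF assms(1)] by (simp add: card_image)
  have lim: "(\<lambda>n. pi_n H n) \<longlonglongrightarrow> real (card (ranks H)) - 1" using assms(2) unfolding degenerate_def .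
  have "(\<lambda>n. pi_n (suspension H) (Suc n)) \<longlonglongrightarrow> real (card (ranks H)) - 1"
  proof (rule real_tendsto_sandwich[OF _ _ tendsto_const lim])
    show "\<forall>\<^sub>F n in sequentially. real (card (ranks H)) - 1 \<le> pi_n (suspension H) (Suc n)"
      unfolding eventually_sequentially using lower[OF assms(1) r0] by (intro exI[of _ "card (fst H)"]) auto
    show "\<forall>\<^sub>F n in sequentially. pi_n (suspension H) (Suc n) \<le> pi_n H n"
      unfolding eventually_sequentially using lower[OF assms(1) r0]
      by (intro exI[of _ "card (fst H)"]) (metis Suc_eq_plus1 Suc_le_mono diff_Suc_1)
  qed
  then show ?thesis unfolding degenerate_def cS by (rule LIMSEQ_imp_Suc)
qed

end
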